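(* Consider the problem $\min_{x\in\mathbb{R}^n}\max_{y\in\Delta}F(x)^Ty$ and assume strict complementarity holds. If $(x,y)$ is a stationary solution, then the vectors $(\nabla f_i(x)^T,1)^T\in\mathbb{R}^{n+1}$, $i\in\mathcal{T}(x)$, are linearly independent (equivalently, the matrix with rows $(\nabla f_i(x)^T,1)$, $i\in\mathcal{T}(x)$, has full row rank).
   Context: $F(x)=(f_1(x),\dots,f_m(x))^T$ is a smooth map $\mathbb{R}^n\to\mathbb{R}^m$ and $\Delta$ the probability simplex in $\mathbb{R}^m$. $(x^*,y^* )$ is a stationary solution if there exist $\mu\in\mathbb{R}$, $\nu\in\mathbb{R}^m$ with $\sum_iy_i^*\nabla f_i(x^* )=0$, $\sum_iy_i^*=1$, $y_i^*\ge0$, $\mu-\nu_i=f_i(x^* )$, $\nu_i\ge0$, $\nu_iy_i^*=0$ for all $i$ (KKT system). Strict complementarity: for every $(x^*,y^*,\mu,\nu)$ satisfying the KKT system, $\nu_i>0$ for all $i$ with $y_i^*=0$. $\mathcal{T}(x)=\{i\in[m]:f_i(x)=\max_jf_j(x)\}$. *)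

theory Defs
  imports "HOL-Analysis.Analysis"
begin

definition prob_simplex :: "(real^'m) set" where
  "prob_simplex = {y. (\<forall>i. 0 \<le> y $ i) \<and> (\<Sum>i\<in>UNIV. y $ i) = 1}"

text \<open>KKT system of min_x max_{y in simplex} F(x)^T y; G i x is the gradient of f_i at x.\<close>
definition KKT :: "(real^'n \<Rightarrow> real^'m) \<Rightarrow> ('m \<Rightarrow> real^'n \<Rightarrow> real^'n)
    \<Rightarrow> real^'n \<Rightarrow> real^'m \<Rightarrow> real \<Rightarrow> real^'m \<Rightarrow> bool" where
  "KKT F G x y \<mu> \<nu> \<longleftrightarrow>
     (\<Sum>i\<in>UNIV. y $ i *\<^sub>R G i x) = 0 \<and>
     y \<in> prob_simplex \<and>
     (\<forall>i. \<mu> - \<nu> $ i = F x $ i) \<and>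
     (\<forall>i. 0 \<le> \<nu> $ i) \<and>
     (\<forall>i. \<nu> $ i * y $ i = 0)"

definition stationary :: "(real^'n \<Rightarrow> real^'m) \<Rightarrow> ('m \<Rightarrow> real^'n \<Rightarrow> real^'n)
    \<Rightarrow> real^'n \<Rightarrow> real^'m \<Rightarrow> bool" where
  "stationary F G x y \<longleftrightarrow> (\<exists>\<mu> \<nu>. KKT F G x y \<mu> \<nu>)"

definition strict_complementarity :: "(real^'n \<Rightarrow> real^'m) \<Rightarrow> ('m \<Rightarrow> real^'n \<Rightarrow> real^'n) \<Rightarrow> bool" where
  "strict_complementarity F G \<longleftrightarrow>
     (\<forall>x y \<mu> \<nu>. KKT F G x y \<mu> \<nu> \<longrightarrow> (\<forall>i. y $ i = 0 \<longrightarrow> 0 < \<nu> $ i))"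

definition active_set :: "(real^'n \<Rightarrow> real^'m) \<Rightarrow> real^'n \<Rightarrow> 'm set" where
  "active_set F x = {i. F x $ i = (MAX j. F x $ j)}"

end

theory Submission
  imports Defs
begin

theorem lemma20:
  fixes F :: "real^'n \<Rightarrow> real^'m"
    and G :: "'m \<Rightarrow> real^'n \<Rightarrow> real^'n"
    and x :: "real^'n" and y :: "real^'m"
  assumes grad: "\<And>i z. GDERIV (\<lambda>w. F w $ i) z :> G i z"
    and C1: "\<And>i. continuous_on UNIV (G i)"
    and sc: "strict_complementarity F G"
    and st: "stationary F G x y"
  shows "\<forall>c :: 'm \<Rightarrow> real.
           (\<Sum>i\<in>active_set F x. c i *\<^sub>R (G i x, 1 :: real)) = 0
           \<longrightarrow> (\<forall>i\<in>active_set F x. c i = 0)"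
proof (intro allI impI ballI)
  fix c :: "'m \<Rightarrow> real" and i0
  assume hc: "(\<Sum>i\<in>active_set F x. c i *\<^sub>R (G i x, 1 :: real)) = 0"
    and i0: "i0 \<in> active_set F x"
  define T where "T = active_set F x"
  obtain \<mu> \<nu> where K: "KKT F G x y \<mu> \<nu>" using st unfolding stationary_def by blast
  have stat: "(\<Sum>i\<in>UNIV. y $ i *\<^sub>R G i x) = 0" and ynn: "\<And>i. 0 \<le> y $ i"
    and ysum: "(\<Sum>i\<in>UNIV. y $ i) = 1" and mu: "\<And>i. \<mu> - \<nu> $ i = F x $ i"
    and nunn: "\<And>i. 0 \<le> \<nu> $ i" and comp: "\<And>i. \<nu> $ i * y $ i = 0"
    using K unfolding KKT_def prob_simplex_def by auto
  obtain k where yk: "y $ k \<noteq> 0"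
  proof (rule ccontr)
    assume "\<not> thesis"
    with that have "\<forall>i. y $ i = 0" by blast
    with ysum show False by simp
  qed
  have Fk: "F x $ k = \<mu>" using comp[of k] yk mu[of k] by simp
  have Mx: "(MAX j. F x $ j) = \<mu>"
  proof (rule Max_eqI)
    show "finite (range (\<lambda>j. F x $ j))" by simp
    show "\<mu> \<in> range (\<lambda>j. F x $ j)" using Fk by (metis rangeI)
    fix z assume "z \<in> range (\<lambda>j. F x $ j)"
    then obtain j where "z = F x $ j" by blast
    thus "z \<le> \<mu>" using mu[of j] nunn[of j] by linarith
  qed
  have nuT: "\<nu> $ i = 0" if "i \<in> T" for i
    using that mu[of i] Mx unfolding T_def active_set_def by simp
  have yT: "y $ i > 0" if "i \<in> T" for i
  proof -
    have "y $ i \<noteq> 0"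
    proof
      assume "y $ i = 0"
      with sc K have "0 < \<nu> $ i" unfolding strict_complementarity_def by blast
      with nuT[OF that] show False by simp
    qed
    with ynn[of i] show ?thesis by simp
  qed
  have finT: "finite T" by simp
  have hG: "(\<Sum>i\<in>T. c i *\<^sub>R G i x) = 0"
    using arg_cong[OF hc, of fst] by (simp add: fst_sum T_def)
  have hs: "(\<Sum>i\<in>T. c i) = 0"
    using arg_cong[OF hc, of snd] by (simp add: snd_sum T_def)
  show "c i0 = 0"
  proof (rule ccontr)
    assume c0: "c i0 \<noteq> 0"
    have "\<exists>i\<in>T. c i < 0"
    proof (rule ccontr)
      assume "\<not> ?thesis"
      hence "\<forall>i\<in>T. 0 \<le> c i" by force
      with hs finT have "\<forall>i\<in>T. c i = 0" using sum_nonneg_eq_0_iff by blast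
      with i0 c0 show False unfolding T_def by blast
    qed
    define S where "S = {i\<in>T. c i < 0}"
    have finS: "finite S" and neS: "S \<noteq> {}" using \<open>\<exists>i\<in>T. c i < 0\<close> by (auto simp: S_def)
    define r where "r = (\<lambda>i. y $ i / (- c i))"
    obtain j where jS: "j \<in> S" and jmin: "\<And>i. i \<in> S \<Longrightarrow> r j \<le> r i"
    proof -
      have "Min (r ` S) \<in> r ` S" using finS neS by simp
      then obtain j where "j \<in> S" "r j = Min (r ` S)" by auto
      thus ?thesis using that finS by (metis Min_le finite_imageI imageI)
    qed
    define t where "t = r j"
    have jT: "j \<in> T" and cj: "c j < 0" using jS by (auto simp: S_def)
    have tpos: "t > 0" unfolding t_def r_def using yT[OF jT] cj by (intro divide_pos_pos) auto
    define c' :: "real^'m" where "c' = (\<chi> i. if i \<in> T then c i else 0)"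
    define y' where "y' = y + t *\<^sub>R c'"
    have y'j: "y' $ j = 0" using cj jT by (simp add: y'_def c'_def t_def r_def)
    have s1: "(\<Sum>i\<in>UNIV. c' $ i *\<^sub>R G i x) = 0"
    proof -
      have "(\<Sum>i\<in>UNIV. c' $ i *\<^sub>R G i x) = (\<Sum>i\<in>UNIV. if i \<in> T then c i *\<^sub>R G i x else 0)"
        by (rule sum.cong) (auto simp: c'_def)
      also have "\<dots> = (\<Sum>i\<in>T. c i *\<^sub>R G i x)" by (simp add: sum.If_cases)
      finally show ?thesis using hG by simp
    qed
    have s2: "(\<Sum>i\<in>UNIV. c' $ i) = 0"
    proof -
      have "(\<Sum>i\<in>UNIV. c' $ i) = (\<Sum>i\<in>UNIV. if i \<in> T then c i else 0)"
        by (rule sum.cong) (auto simp: c'_def)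
      also have "\<dots> = (\<Sum>i\<in>T. c i)" by (simp add: sum.If_cases)
      finally show ?thesis using hs by simp
    qed
    have K': "KKT F G x y' \<mu> \<nu>"
      unfolding KKT_def prob_simplex_def
    proof (intro conjI allI CollectI)
      show "(\<Sum>i\<in>UNIV. y' $ i *\<^sub>R G i x) = 0"
      proof -
        have "(\<Sum>i\<in>UNIV. y' $ i *\<^sub>R G i x)
            = (\<Sum>i\<in>UNIV. y $ i *\<^sub>R G i x + t *\<^sub>R (c' $ i *\<^sub>R G i x))"
          by (rule sum.cong) (simp_all add: y'_def scaleR_add_left)
        also have "\<dots> = (\<Sum>i\<in>UNIV. y $ i *\<^sub>R G i x) + t *\<^sub>R (\<Sum>i\<in>UNIV. c' $ i *\<^sub>R G i x)"
          by (simp only: sum.distrib scaleR_sum_right)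
        finally show ?thesis using stat s1 by simp
      qed
      show "(\<Sum>i\<in>UNIV. y' $ i) = 1"
        using ysum s2 by (simp add: y'_def sum.distrib sum_distrib_left[symmetric])
      fix i
      show "\<mu> - \<nu> $ i = F x $ i" by (rule mu)
      show "0 \<le> \<nu> $ i" by (rule nunn)
      show "\<nu> $ i * y' $ i = 0"
        using comp[of i] nuT[of i] by (cases "i \<in> T") (auto simp: y'_def c'_def)
      show "0 \<le> y' $ i"
      proof (cases "i \<in> T \<and> c i < 0")
        case True
        hence "i \<in> S" by (simp add: S_def)
        hence "t \<le> y $ i / (- c i)" using jmin by (simp add: t_def r_def)
        hence "t * (- c i) \<le> y $ i" using True by (simp add: field_simps)
        thus ?thesis using True by (simp add: y'_def c'_def)
      next
        case False
        thus ?thesis using ynn[of i] tpos by (auto simp: y'_def c'_def)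
      qed
    qed
    with sc y'j have "0 < \<nu> $ j" unfolding strict_complementarity_def by blast
    with nuT[OF jT] show False by simp
  qed
qed

end
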